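(* Let $K$ be a field which is not absolutely algebraic. Then $K$ has a maximal subring which is integrally closed in $K$ and is a conch subring of $K$.
   Context: All rings are commutative with $1\neq0$ and subrings are unital. A field is absolutely algebraic if it is algebraic over $\mathbb{F}_p$ for some prime $p$. A maximal subring is a proper subring maximal with respect to inclusion among proper subrings. For a unit $x\in K$, a subring $V$ is a conch subring conching $x$ if $x^{-1}\in V$, $x\notin V$ and $V$ is maximal among subrings containing $x^{-1}$ but not $x$. *)

theory Defs
  imports "HOL-Computational_Algebra.Polynomial"
begin

definition subring :: "'a::comm_ring_1 set \<Rightarrow> bool" where
  "subring S \<longleftrightarrow> 1 \<in> S \<and> (\<forall>x\<in>S. \<forall>y\<in>S. x + y \<in> S \<and> x * y \<in> S \<and> - x \<in> S)"

definition maximal_subring :: "'a::comm_ring_1 set \<Rightarrow> bool" where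
  "maximal_subring S \<longleftrightarrow> subring S \<and> S \<noteq> UNIV \<and>
     (\<forall>T. subring T \<and> T \<noteq> UNIV \<and> S \<subseteq> T \<longrightarrow> T = S)"

definition integral_over :: "'a::comm_ring_1 set \<Rightarrow> 'a \<Rightarrow> bool" where
  "integral_over S x \<longleftrightarrow>
     (\<exists>p. lead_coeff p = 1 \<and> (\<forall>i. coeff p i \<in> S) \<and> poly p x = 0)"

definition integrally_closed_in_univ :: "'a::comm_ring_1 set \<Rightarrow> bool" where
  "integrally_closed_in_univ S \<longleftrightarrow> (\<forall>x. integral_over S x \<longrightarrow> x \<in> S)"

definition conching :: "'a::field set \<Rightarrow> 'a \<Rightarrow> bool" where
  "conching V x \<longleftrightarrow> x \<noteq> 0 \<and> subring V \<and> inverse x \<in> V \<and> x \<notin> V \<and>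
     (\<forall>W. subring W \<and> inverse x \<in> W \<and> x \<notin> W \<and> V \<subseteq> W \<longrightarrow> W = V)"

definition conch_subring :: "'a::field set \<Rightarrow> bool" where
  "conch_subring V \<longleftrightarrow> (\<exists>x. conching V x)"

text \<open>Algebraic over the prime field F_p (the image of the integers in K).\<close>
definition absolutely_algebraic :: "'a::field itself \<Rightarrow> bool" where
  "absolutely_algebraic _ \<longleftrightarrow> prime CHAR('a) \<and>
     (\<forall>x::'a. \<exists>p. p \<noteq> 0 \<and> (\<forall>i. coeff p i \<in> range of_int) \<and> poly p x = 0)"

end

theory Submission
  imports Defs
begin


definition cin :: "'a::comm_ring_1 set \<Rightarrow> 'a poly \<Rightarrow> bool" where
  "cin S p \<longleftrightarrow> (\<forall>i. coeff p i \<in> S)"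

definition adj :: "'a::comm_ring_1 set \<Rightarrow> 'a \<Rightarrow> 'a set" where
  "adj S y = {poly p y | p. cin S p}"

lemma sr_one: "subring S \<Longrightarrow> 1 \<in> S" by (simp add: subring_def)
lemma sr_add: "subring S \<Longrightarrow> x \<in> S \<Longrightarrow> y \<in> S \<Longrightarrow> x + y \<in> S" by (simp add: subring_def)
lemma sr_mult: "subring S \<Longrightarrow> x \<in> S \<Longrightarrow> y \<in> S \<Longrightarrow> x * y \<in> S" by (simp add: subring_def)
lemma sr_neg: "subring S \<Longrightarrow> x \<in> S \<Longrightarrow> - x \<in> S" by (simp add: subring_def)
lemma sr_zero: "subring S \<Longrightarrow> 0 \<in> S"
  using sr_add[of S 1 "-1"] sr_one sr_neg by fastforce
lemma sr_diff: "subring S \<Longrightarrow> x \<in> S \<Longrightarrow> y \<in> S \<Longrightarrow> x - y \<in> S"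
  using sr_add sr_neg by (metis diff_conv_add_uminus)
lemma sr_power: "subring S \<Longrightarrow> x \<in> S \<Longrightarrow> x ^ n \<in> S"
  by (induct n) (auto intro: sr_one sr_mult)
lemma sr_sum: "subring S \<Longrightarrow> (\<And>i. i \<in> A \<Longrightarrow> f i \<in> S) \<Longrightarrow> sum f A \<in> S"
proof (induct A rule: infinite_finite_induct)
  case (infinite A) then show ?case by (simp add: sr_zero)
next
  case empty then show ?case by (simp add: sr_zero)
next
  case (insert x F) then show ?case by (simp add: sr_add)
qed
lemma sr_of_nat: "subring S \<Longrightarrow> of_nat n \<in> S"
  by (induct n) (auto intro: sr_zero sr_one sr_add)
lemma sr_of_int: "subring S \<Longrightarrow> of_int n \<in> S"
proof -
  assume S: "subring S"
  show ?thesis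
  proof (cases "n < 0")
    case True
    then have "of_int n = - (of_nat (nat (- n)) :: 'a)" by (metis of_int_of_nat)
    then show ?thesis using sr_neg[OF S sr_of_nat[OF S]] by simp
  next
    case False
    then have "of_int n = (of_nat (nat n) :: 'a)" by (metis of_int_of_nat)
    then show ?thesis using sr_of_nat[OF S] by simp
  qed
qed

lemma cin_mult: "subring S \<Longrightarrow> cin S p \<Longrightarrow> cin S q \<Longrightarrow> cin S (p * q)"
  unfolding cin_def coeff_mult by (auto intro!: sr_sum sr_mult)
lemma cin_add: "subring S \<Longrightarrow> cin S p \<Longrightarrow> cin S q \<Longrightarrow> cin S (p + q)"
  unfolding cin_def by (auto intro!: sr_add)
lemma cin_diff: "subring S \<Longrightarrow> cin S p \<Longrightarrow> cin S q \<Longrightarrow> cin S (p - q)"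
  unfolding cin_def by (auto intro!: sr_diff)
lemma cin_uminus: "subring S \<Longrightarrow> cin S p \<Longrightarrow> cin S (- p)"
  unfolding cin_def by (auto intro!: sr_neg)
lemma cin_smult: "subring S \<Longrightarrow> a \<in> S \<Longrightarrow> cin S p \<Longrightarrow> cin S (smult a p)"
  unfolding cin_def by (auto intro!: sr_mult)
lemma cin_monom: "subring S \<Longrightarrow> a \<in> S \<Longrightarrow> cin S (monom a n)"
  unfolding cin_def by (auto simp: coeff_monom sr_zero)
lemma cin_const: "subring S \<Longrightarrow> a \<in> S \<Longrightarrow> cin S [:a:]"
  unfolding cin_def by (auto simp: coeff_pCons sr_zero split: nat.split)
lemma cin_zero: "subring S \<Longrightarrow> cin S 0"
  unfolding cin_def by (simp add: sr_zero)
lemma cin_one: "subring S \<Longrightarrow> cin S 1"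
  using cin_const[of S 1] by (simp add: sr_one one_pCons)
lemma cin_pCons: "cin S (pCons a p) \<longleftrightarrow> a \<in> S \<and> cin S p"
proof
  assume "cin S (pCons a p)"
  then show "a \<in> S \<and> cin S p" unfolding cin_def by (metis coeff_pCons_0 coeff_pCons_Suc)
next
  assume "a \<in> S \<and> cin S p"
  then show "cin S (pCons a p)" unfolding cin_def by (simp add: coeff_pCons split: nat.split)
qed
lemma cin_sum: "subring S \<Longrightarrow> (\<And>i. i \<in> A \<Longrightarrow> cin S (f i)) \<Longrightarrow> cin S (sum f A)"
  unfolding cin_def coeff_sum by (auto intro!: sr_sum)
lemma cin_mono: "S \<subseteq> T \<Longrightarrow> cin S p \<Longrightarrow> cin T p"
  unfolding cin_def by auto

lemma poly_in: "subring S \<Longrightarrow> cin S p \<Longrightarrow> x \<in> S \<Longrightarrow> poly p x \<in> S"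
  unfolding poly_altdef cin_def by (auto intro!: sr_sum sr_mult sr_power)

lemma adj_subring: "subring S \<Longrightarrow> subring (adj S y)"
proof -
  assume S: "subring S"
  have "1 \<in> adj S y" unfolding adj_def using cin_one[OF S] by (auto intro!: exI[of _ 1])
  moreover have "a + b \<in> adj S y \<and> a * b \<in> adj S y \<and> - a \<in> adj S y"
    if ab: "a \<in> adj S y" "b \<in> adj S y" for a b
  proof -
    obtain p q where "cin S p" "cin S q" "a = poly p y" "b = poly q y"
      using ab unfolding adj_def by blast
    have 1: "a + b = poly (p + q) y" "a * b = poly (p * q) y" "- a = poly (- p) y"
      using \<open>a = _\<close> \<open>b = _\<close> by simp_all
    have 2: "cin S (p + q)" "cin S (p * q)" "cin S (- p)"
      using \<open>cin S p\<close> \<open>cin S q\<close> by (simp_all add: cin_add cin_mult cin_uminus S)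
    show ?thesis unfolding adj_def using 1 2 by blast
  qed
  ultimately show ?thesis unfolding subring_def by blast
qed

lemma adj_sub: "subring S \<Longrightarrow> S \<subseteq> adj S y"
  unfolding adj_def by (auto intro!: exI[of _ "[:_:]"] cin_const)

lemma adj_y: "subring S \<Longrightarrow> y \<in> adj S y"
  unfolding adj_def by (auto intro!: exI[of _ "[:0,1:]"] simp: cin_pCons sr_zero sr_one cin_zero)



lemma poly_le: fixes x :: "'a::comm_ring_1" assumes "degree p \<le> m" shows "poly p x = (\<Sum>i\<le>m. coeff p i * x ^ i)"
proof -
  have "(\<Sum>i\<le>degree p. coeff p i * x ^ i) = (\<Sum>i\<le>m. coeff p i * x ^ i)"
    by (rule sum.mono_neutral_left) (use assms in \<open>auto simp: coeff_eq_0\<close>)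
  then show ?thesis by (simp add: poly_altdef)
qed

lemma cin_reflect: "subring S \<Longrightarrow> cin S p \<Longrightarrow> cin S (reflect_poly p)"
  unfolding cin_def by (auto simp: coeff_reflect_poly sr_zero)

locale mx =
  fixes V :: "'a::field set" and t :: 'a
  assumes sub: "subring V" and tV: "t \<in> V" and it: "inverse t \<notin> V"
    and max: "\<And>S. subring S \<Longrightarrow> V \<subseteq> S \<Longrightarrow> inverse t \<notin> S \<Longrightarrow> S = V"
begin

lemma t_nz: "t \<noteq> 0"
  using it sr_zero[OF sub] by auto

lemma notin_adj: "y \<notin> V \<Longrightarrow> \<exists>p. cin V p \<and> poly p y = inverse t"
proof -
  assume y: "y \<notin> V"
  have "adj V y \<noteq> V" using adj_y[OF sub, of y] y by auto
  then have "inverse t \<in> adj V y"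
    using max[OF adj_subring[OF sub] adj_sub[OF sub]] by blast
  then show ?thesis unfolding adj_def by auto
qed

lemma nonunit: "s \<in> V \<Longrightarrow> s \<noteq> 0 \<Longrightarrow> inverse s \<notin> V \<Longrightarrow> \<exists>n. \<exists>v\<in>V. s ^ n = t * v"
proof -
  assume s: "s \<in> V" "s \<noteq> 0" "inverse s \<notin> V"
  obtain p where p: "cin V p" "poly p (inverse s) = inverse t" using notin_adj[OF s(3)] by blast
  have "poly (reflect_poly p) s = s ^ degree p * inverse t"
    using poly_reflect_poly_nz[OF s(2), of p] p(2) by simp
  moreover have "poly (reflect_poly p) s \<in> V"
    by (rule poly_in[OF sub cin_reflect[OF sub p(1)] s(1)])
  ultimately show ?thesis using t_nz by (intro exI[of _ "degree p"] bexI[of _ "s ^ degree p * inverse t"]) auto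
qed

lemma pow1: "v \<in> V \<Longrightarrow> \<exists>z\<in>V. (1 + t * v) ^ n = 1 + t * z"
proof (induct n)
  case 0 then show ?case using sr_zero[OF sub] by auto
next
  case (Suc n)
  then obtain z where z: "z \<in> V" "(1 + t * v) ^ n = 1 + t * z" by auto
  have "(1 + t * v) ^ Suc n = 1 + t * (z + v + t * z * v)"
    using z(2) by (simp add: algebra_simps)
  moreover have "z + v + t * z * v \<in> V"
    using z(1) Suc(2) tV sub by (simp add: sr_add sr_mult)
  ultimately show ?case by blast
qed

lemma unit1: "v \<in> V \<Longrightarrow> inverse (1 + t * v) \<in> V"
proof (rule ccontr)
  assume v: "v \<in> V" and n: "inverse (1 + t * v) \<notin> V"
  have nz: "1 + t * v \<noteq> 0"
  proof
    assume "1 + t * v = 0"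
    then have "inverse t = - v" using t_nz by (simp add: field_simps add_eq_0_iff)
    then show False using it sr_neg[OF sub v] by simp
  qed
  have "1 + t * v \<in> V" using v tV sub by (simp add: sr_add sr_mult sr_one)
  then obtain n w where w: "w \<in> V" "(1 + t * v) ^ n = t * w"
    using nonunit nz n by blast
  obtain z where z: "z \<in> V" "(1 + t * v) ^ n = 1 + t * z" using pow1[OF v] by blast
  have "inverse t = w - z" using w(2) z(2) t_nz by (simp add: field_simps)
  then show False using it sr_diff[OF sub w(1) z(1)] by simp
qed

definition good :: "'a \<Rightarrow> nat \<Rightarrow> bool" where
  "good y n \<longleftrightarrow> (\<exists>q. degree q \<le> n \<and> cin V q \<and> poly q y = inverse t)"

lemma reduce:
  assumes gy: "good y n" and giy: "good (inverse y) m" and mn: "m \<le> n" and y0: "y \<noteq> 0"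
  shows "n \<ge> 1 \<and> good y (n - 1)"
proof -
  obtain q where q: "degree q \<le> n" "cin V q" "poly q y = inverse t" using gy good_def by auto
  obtain r where r: "degree r \<le> m" "cin V r" "poly r (inverse y) = inverse t" using giy good_def by auto
  have n1: "n \<ge> 1"
  proof (rule ccontr)
    assume "\<not> n \<ge> 1"
    then have "degree q = 0" using q(1) by simp
    then obtain c where "q = [:c:]" by (metis degree_0_id)
    then have "poly q y = coeff q 0" by simp
    then show False using q(2,3) it cin_def by metis
  qed
  define b0 where "b0 = coeff r 0"
  have b0V: "b0 \<in> V" using r(2) cin_def b0_def by auto
  define u where "u = inverse (1 - t * b0)"
  have uV: "u \<in> V" using unit1[of "- b0"] b0V sr_neg[OF sub] u_def by simp
  have nz: "1 - t * b0 \<noteq> 0"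
  proof
    assume "1 - t * b0 = 0"
    then have "inverse t = b0" using t_nz by (simp add: field_simps)
    then show False using it b0V by simp
  qed
  have rs: "poly r (inverse y) = (\<Sum>j\<le>m. coeff r j * inverse y ^ j)" by (rule poly_le[OF r(1)])
  have "{..m} = insert 0 {1..m}" by auto
  then have "(\<Sum>j\<le>m. coeff r j * inverse y ^ j) = b0 + (\<Sum>j\<in>{1..m}. coeff r j * inverse y ^ j)"
    by (simp add: b0_def)
  then have sum1: "(\<Sum>j\<in>{1..m}. coeff r j * inverse y ^ j) = inverse t - b0" using rs r(3) by simp
  define s where "s = (\<Sum>j\<in>{1..m}. monom (t * u * coeff r j) (n - j))"
  have "poly s y = (\<Sum>j\<in>{1..m}. t * u * coeff r j * y ^ (n - j))"
    unfolding s_def poly_sum by (simp add: poly_monom)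
  also have "\<dots> = (\<Sum>j\<in>{1..m}. t * u * y ^ n * (coeff r j * inverse y ^ j))"
  proof (rule sum.cong[OF refl])
    fix j assume "j \<in> {1..m}"
    then have "j \<le> n" using mn by auto
    then have "y ^ n = y ^ (n - j) * y ^ j" by (metis le_add_diff_inverse2 power_add)
    then have "y ^ (n - j) = y ^ n * inverse y ^ j" using y0 by (simp add: field_simps power_inverse)
    then show "t * u * coeff r j * y ^ (n - j) = t * u * y ^ n * (coeff r j * inverse y ^ j)" by simp
  qed
  also have "\<dots> = t * u * y ^ n * (\<Sum>j\<in>{1..m}. coeff r j * inverse y ^ j)" by (simp add: sum_distrib_left)
  also have "\<dots> = t * u * y ^ n * (inverse t - b0)" by (simp only: sum1)
  also have "\<dots> = (u * (1 - t * b0)) * y ^ n"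
  proof -
    have "t * (inverse t - b0) = 1 - t * b0" using t_nz by (simp add: algebra_simps)
    then show ?thesis by (metis mult.commute mult.left_commute)
  qed
  also have "\<dots> = y ^ n" using nz u_def by simp
  finally have ps: "poly s y = y ^ n" .
  have ds: "degree s \<le> n - 1"
  proof (rule degree_le, intro allI impI)
    fix i assume "n - 1 < i"
    then show "coeff s i = 0" unfolding s_def coeff_sum coeff_monom by (intro sum.neutral) auto
  qed
  have cs: "cin V s" unfolding s_def
    using sub tV uV r(2) by (intro cin_sum cin_monom) (auto simp: cin_def sr_mult)
  define a where "a = coeff q n"
  have aV: "a \<in> V" using q(2) cin_def a_def by auto
  define q' where "q' = q - monom a n + smult a s"
  have "poly q' y = poly q y" unfolding q'_def by (simp add: poly_monom ps)
  moreover have "cin V q'" unfolding q'_def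
    using sub aV cs q(2) by (intro cin_add cin_diff cin_monom cin_smult) auto
  moreover have "degree q' \<le> n - 1"
  proof (rule degree_le, intro allI impI)
    fix i assume i: "n - 1 < i"
    have "coeff s i = 0" using ds i by (intro coeff_eq_0) linarith
    moreover have "i > n \<Longrightarrow> coeff q i = 0" using q(1) by (intro coeff_eq_0) linarith
    ultimately show "coeff q' i = 0" unfolding q'_def a_def using i n1
      by (cases "i = n") (auto simp: coeff_monom)
  qed
  ultimately show ?thesis using n1 q(3) good_def by auto
qed

lemma valuation: "y \<noteq> 0 \<Longrightarrow> y \<in> V \<or> inverse y \<in> V"
proof (rule ccontr)
  assume y0: "y \<noteq> 0" and c: "\<not> (y \<in> V \<or> inverse y \<in> V)"
  obtain p1 where p1: "cin V p1" "poly p1 y = inverse t" using notin_adj c by blast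
  obtain p2 where p2: "cin V p2" "poly p2 (inverse y) = inverse t" using notin_adj c by blast
  have g1: "good y (degree p1)" using p1 good_def by auto
  have g2: "good (inverse y) (degree p2)" using p2 good_def by auto
  have "\<forall>n m. n + m = N \<longrightarrow> good y n \<longrightarrow> good (inverse y) m \<longrightarrow> False" for N
  proof (induct N rule: less_induct)
    case (less N)
    show ?case
    proof (intro allI impI)
      fix n m assume nm: "n + m = N" and gn: "good y n" and gm: "good (inverse y) m"
      show False
      proof (cases "m \<le> n")
        case True
        then have "n \<ge> 1 \<and> good y (n - 1)" using reduce gn gm y0 by blast
        moreover have "n - 1 + m < N" using nm \<open>n \<ge> 1 \<and> _\<close> by auto
        ultimately show False using less[of "n - 1 + m"] gm by blast
      next
        case False
        then have "m \<ge> 1 \<and> good (inverse y) (m - 1)"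
          using reduce[of "inverse y" m n] gn gm y0 by simp
        moreover have "n + (m - 1) < N" using nm \<open>m \<ge> 1 \<and> _\<close> by auto
        ultimately show False using less[of "n + (m - 1)"] gn by blast
      qed
    qed
  qed
  then show False using g1 g2 by blast
qed

end


lemma shift0:
  fixes w :: "'a::field"
  shows "p \<noteq> 0 \<Longrightarrow> cin S p \<Longrightarrow> poly p w = 0 \<Longrightarrow> w \<noteq> 0 \<Longrightarrow> \<exists>q. cin S q \<and> coeff q 0 \<noteq> 0 \<and> poly q w = 0"
proof (induct p rule: pCons_induct)
  case 0 then show ?case by simp
next
  case (pCons a p)
  show ?case
  proof (cases "a = 0")
    case False
    then show ?thesis using pCons.prems by (intro exI[of _ "pCons a p"]) auto
  next
    case True
    then have "p \<noteq> 0" using pCons by auto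
    moreover have "cin S p" using pCons.prems cin_pCons by blast
    moreover have "poly p w = 0" using pCons.prems True by simp
    ultimately show ?thesis using pCons.hyps pCons.prems by blast
  qed
qed

context mx
begin

lemma int_closed: "integrally_closed_in_univ V"
  unfolding integrally_closed_in_univ_def integral_over_def
proof (intro allI impI)
  fix y assume "\<exists>p. lead_coeff p = 1 \<and> (\<forall>i. coeff p i \<in> V) \<and> poly p y = 0"
  then obtain p where p: "lead_coeff p = 1" "cin V p" "poly p y = 0" unfolding cin_def by auto
  show "y \<in> V"
  proof (rule ccontr)
    assume yn: "y \<notin> V"
    then have y0: "y \<noteq> 0" using sr_zero[OF sub] by auto
    then have iy: "inverse y \<in> V" using valuation yn by blast
    obtain a p2 where rp: "reflect_poly p = pCons a p2" by (metis pCons_cases)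
    have "a = 1" using rp p(1) by (metis coeff_0_reflect_poly coeff_pCons_0)
    have c2: "cin V p2" using cin_reflect[OF sub p(2)] rp cin_pCons by metis
    have "poly (reflect_poly p) (inverse y) = 0"
      using poly_reflect_poly_nz[of "inverse y" p] y0 p(3) by simp
    then have "1 + inverse y * poly p2 (inverse y) = 0" using rp \<open>a = 1\<close> by simp
    then have "y * (1 + inverse y * poly p2 (inverse y)) = 0" by simp
    moreover have "y * (1 + inverse y * poly p2 (inverse y)) = y + (y * inverse y) * poly p2 (inverse y)"
      by (simp add: algebra_simps)
    ultimately have "y + poly p2 (inverse y) = 0" using y0 by simp
    then have "y = - poly p2 (inverse y)" by (simp add: add_eq_0_iff)
    then show False using yn sr_neg[OF sub poly_in[OF sub c2 iy]] by simp
  qed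
qed

lemma conch: "conch_subring V"
  unfolding conch_subring_def conching_def
  using t_nz sub tV it max by (intro exI[of _ "inverse t"]) auto

lemma maxsub:
  assumes OV: "B \<subseteq> V"
    and R1: "\<And>c. c \<in> B \<Longrightarrow> c \<noteq> 0 \<Longrightarrow> \<exists>k a h. a \<in> B \<and> a \<noteq> 0 \<and> inverse a \<in> B \<and> h \<in> B \<and> c = t ^ k * (a + t * h)"
    and R2: "\<And>w. w \<noteq> 0 \<Longrightarrow> \<exists>p. cin B p \<and> p \<noteq> 0 \<and> poly p w = 0"
  shows "maximal_subring V"
proof -
  have key: "\<exists>k. \<exists>g\<in>V. z = inverse t ^ k * g" if zn: "z \<notin> V" for z
  proof -
    have z0: "z \<noteq> 0" using zn sr_zero[OF sub] by auto
    define w where "w = inverse z"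
    have wV: "w \<in> V" using valuation[OF z0] zn w_def by auto
    have w0: "w \<noteq> 0" using z0 w_def by simp
    obtain p0 where "cin B p0" "p0 \<noteq> 0" "poly p0 w = 0" using R2[OF w0] by blast
    then obtain p where p: "cin B p" "coeff p 0 \<noteq> 0" "poly p w = 0" using shift0 w0 by blast
    obtain c0 p' where pp: "p = pCons c0 p'" by (metis pCons_cases)
    have c0O: "c0 \<in> B" and cp': "cin B p'" using p(1) pp cin_pCons by auto
    have c00: "c0 \<noteq> 0" using p(2) pp by simp
    define g0 where "g0 = - poly p' w"
    have g0V: "g0 \<in> V" unfolding g0_def
      using sr_neg[OF sub poly_in[OF sub cin_mono[OF OV cp'] wV]] .
    have c0w: "c0 = w * g0" using p(3) pp g0_def by (simp add: algebra_simps add_eq_0_iff)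
    obtain k a h where akh: "a \<in> B" "a \<noteq> 0" "inverse a \<in> B" "h \<in> B" "c0 = t ^ k * (a + t * h)"
      using R1[OF c0O c00] by blast
    have ahnz: "a + t * h \<noteq> 0" using akh(5) c00 by auto
    have "inverse (a + t * h) = inverse a * inverse (1 + t * (h * inverse a))"
      using akh(2) by (simp add: field_simps)
    moreover have "inverse (1 + t * (h * inverse a)) \<in> V"
    proof -
      have "h * inverse a \<in> V" using OV akh sr_mult[OF sub] by auto
      then show ?thesis by (rule unit1)
    qed
    ultimately have eV: "inverse (a + t * h) \<in> V" using OV akh(3) sr_mult[OF sub] by auto
    have "t ^ k = c0 * inverse (a + t * h)" using akh(5) ahnz by simp
    then have "z * t ^ k = (z * w) * (g0 * inverse (a + t * h))" using c0w by (simp add: mult_ac)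
    then have "z * t ^ k = g0 * inverse (a + t * h)" using w_def z0 by simp
    moreover have "inverse t ^ k * (z * t ^ k) = z * (inverse t * t) ^ k"
      by (simp add: power_mult_distrib mult_ac)
    ultimately have "z = inverse t ^ k * (g0 * inverse (a + t * h))"
      using t_nz by simp
    then show ?thesis using sr_mult[OF sub g0V eV] by blast
  qed
  have "V \<noteq> UNIV" using it by auto
  moreover have "T = V" if T: "subring T" "T \<noteq> UNIV" "V \<subseteq> T" for T
  proof (cases "inverse t \<in> T")
    case False
    then show ?thesis using max T by blast
  next
    case True
    have "z \<in> T" for z
    proof (cases "z \<in> V")
      case True then show ?thesis using T by auto
    next
      case False
      then obtain k g where "g \<in> V" "z = inverse t ^ k * g" using key by blast
      then show ?thesis using T \<open>inverse t \<in> T\<close> sr_mult sr_power by blast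
    qed
    then show ?thesis using T by auto
  qed
  ultimately show ?thesis unfolding maximal_subring_def using sub by blast
qed

end


lemma zorn_sub:
  assumes "A \<noteq> {}"
    and "\<And>C. C \<noteq> {} \<Longrightarrow> C \<subseteq> A \<Longrightarrow> (\<forall>x\<in>C. \<forall>y\<in>C. x \<subseteq> y \<or> y \<subseteq> x) \<Longrightarrow> \<Union>C \<in> A"
  shows "\<exists>M\<in>A. \<forall>X\<in>A. M \<subseteq> X \<longrightarrow> X = M"
proof (rule subset_Zorn_nonempty)
  show "A \<noteq> {}" by (rule assms(1))
  fix C assume "C \<noteq> {}" "subset.chain A C"
  then show "\<Union>C \<in> A" using assms(2)[of C] unfolding subset.chain_def by blast
qed

lemma chain_subring:
  assumes "C \<noteq> {}" "\<And>S. S \<in> C \<Longrightarrow> subring S" "\<forall>x\<in>C. \<forall>y\<in>C. x \<subseteq> y \<or> y \<subseteq> x"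
  shows "subring (\<Union>C)"
proof -
  obtain S0 where "S0 \<in> C" using assms(1) by auto
  then have "1 \<in> \<Union>C" using assms(2) sr_one by blast
  moreover have "x + y \<in> \<Union>C \<and> x * y \<in> \<Union>C \<and> - x \<in> \<Union>C" if xy: "x \<in> \<Union>C" "y \<in> \<Union>C" for x y
  proof -
    obtain S1 S2 where "S1 \<in> C" "S2 \<in> C" "x \<in> S1" "y \<in> S2" using xy by auto
    have "\<exists>S. S \<in> C \<and> x \<in> S \<and> y \<in> S"
    proof (cases "S1 \<subseteq> S2")
      case True then show ?thesis using \<open>S2 \<in> C\<close> \<open>x \<in> S1\<close> \<open>y \<in> S2\<close> by blast
    next
      case False
      then have "S2 \<subseteq> S1" using assms(3) \<open>S1 \<in> C\<close> \<open>S2 \<in> C\<close> by blast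
      then show ?thesis using \<open>S1 \<in> C\<close> \<open>x \<in> S1\<close> \<open>y \<in> S2\<close> by blast
    qed
    then obtain S where "S \<in> C" "x \<in> S" "y \<in> S" by blast
    then show ?thesis using assms(2)[of S] sr_add sr_mult sr_neg by blast
  qed
  ultimately show ?thesis unfolding subring_def by blast
qed

lemma from_base:
  fixes B :: "'a::field set"
  assumes sB: "subring B" and tB: "t \<in> B" and itB: "inverse t \<notin> B"
    and R1: "\<And>c. c \<in> B \<Longrightarrow> c \<noteq> 0 \<Longrightarrow> \<exists>k a h. a \<in> B \<and> a \<noteq> 0 \<and> inverse a \<in> B \<and> h \<in> B \<and> c = t ^ k * (a + t * h)"
    and R2: "\<And>w. w \<noteq> 0 \<Longrightarrow> \<exists>p. cin B p \<and> p \<noteq> 0 \<and> poly p w = 0"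
  shows "\<exists>R::'a set. maximal_subring R \<and> integrally_closed_in_univ R \<and> conch_subring R"
proof -
  let ?F = "{S. subring S \<and> B \<subseteq> S \<and> inverse t \<notin> S}"
  have "\<exists>M\<in>?F. \<forall>X\<in>?F. M \<subseteq> X \<longrightarrow> X = M"
  proof (rule zorn_sub)
    have "B \<in> ?F" using sB itB by blast
    then show "?F \<noteq> {}" by blast
  next
    fix C assume C: "C \<noteq> {}" "C \<subseteq> ?F" "\<forall>x\<in>C. \<forall>y\<in>C. x \<subseteq> y \<or> y \<subseteq> x"
    have "subring (\<Union>C)"
    proof (rule chain_subring[OF C(1) _ C(3)])
      fix S assume "S \<in> C" then show "subring S" using C(2) by blast
    qed
    moreover have "B \<subseteq> \<Union>C" using C(1,2) by blast
    moreover have "inverse t \<notin> \<Union>C" using C(2) by blast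
    ultimately show "\<Union>C \<in> ?F" by blast
  qed
  then obtain V where V1: "V \<in> ?F" and V2: "\<forall>X\<in>?F. V \<subseteq> X \<longrightarrow> X = V" ..
  have V: "V \<in> ?F" "\<And>X. X \<in> ?F \<Longrightarrow> V \<subseteq> X \<Longrightarrow> X = V"
    using V1 apply assumption
    using V2 by (metis (no_types, lifting))
  interpret mx V t
  proof
    show "subring V" "inverse t \<notin> V" using V(1) by blast+
    show "t \<in> V" using V(1) tB by blast
    fix S assume S: "subring S" "V \<subseteq> S" "inverse t \<notin> S"
    then have "S \<in> ?F" using V(1) by blast
    then show "S = V" using V(2) S(2) by blast
  qed
  have BV: "B \<subseteq> V" using V(1) by blast
  have "maximal_subring V" by (rule maxsub[OF BV R1 R2])
  then show ?thesis using int_closed conch by blast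
qed



lemma range_of_int_subring: "subring (range (of_int :: int \<Rightarrow> 'a::comm_ring_1))"
  unfolding subring_def
  by (auto intro: range_eqI[of _ _ "_ + _"] range_eqI[of _ _ "_ * _"] range_eqI[of _ _ "- _"] range_eqI[of _ _ 1])

lemma ofint0:
  assumes "CHAR('a::field) = 0" "(of_int m :: 'a) = 0" shows "m = 0"
proof (rule ccontr)
  assume m: "m \<noteq> 0"
  have "nat \<bar>m\<bar> > 0" using m by simp
  then have "(of_nat (nat \<bar>m\<bar>) :: 'a) \<noteq> 0" using assms(1) CHAR_eq0_iff by blast
  moreover have "(of_nat (nat \<bar>m\<bar>) :: 'a) = of_int \<bar>m\<bar>" by simp
  moreover have "(of_int \<bar>m\<bar> :: 'a) = 0" using assms(2) by (simp add: abs_if)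
  ultimately show False by simp
qed

lemma two_split: "(n::int) \<noteq> 0 \<Longrightarrow> \<exists>k m. n = 2 ^ k * (1 + 2 * m)"
proof (induct "nat \<bar>n\<bar>" arbitrary: n rule: less_induct)
  case less
  show ?case
  proof (cases "even n")
    case False
    then obtain m where "n = 2 * m + 1" by (metis oddE)
    then show ?thesis by (intro exI[of _ 0] exI[of _ m]) simp
  next
    case True
    then obtain n' where n': "n = 2 * n'" by blast
    then have "n' \<noteq> 0" "nat \<bar>n'\<bar> < nat \<bar>n\<bar>" using less.prems by auto
    then obtain k m where "n' = 2 ^ k * (1 + 2 * m)" using less.hyps by blast
    then show ?thesis using n' by (intro exI[of _ "Suc k"] exI[of _ m]) simp
  qed
qed

lemma caseB:
  assumes ch: "CHAR('a::field) = 0"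
    and alg: "\<forall>x::'a. \<exists>p. p \<noteq> 0 \<and> (\<forall>i. coeff p i \<in> range of_int) \<and> poly p x = 0"
  shows "\<exists>R::'a set. maximal_subring R \<and> integrally_closed_in_univ R \<and> conch_subring R"
proof (rule from_base[of "range of_int" 2])
  show "subring (range (of_int :: int \<Rightarrow> 'a))" by (rule range_of_int_subring)
  show "(2::'a) \<in> range of_int" by (rule range_eqI[of _ _ 2]) simp
  show "inverse (2::'a) \<notin> range of_int"
  proof
    assume "inverse (2::'a) \<in> range of_int"
    then obtain n where n: "inverse (2::'a) = of_int n" by auto
    have "(of_int 2 :: 'a) \<noteq> 0" using ofint0[OF ch, of 2] by auto
    then have "(2::'a) \<noteq> 0" by simp
    then have "(2::'a) * of_int n = 1" using n by (metis right_inverse)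
    then have "(of_int (2 * n - 1) :: 'a) = 0" by simp
    then have "2 * n - 1 = 0" by (rule ofint0[OF ch])
    then show False by presburger
  qed
  fix c :: 'a assume "c \<in> range of_int" "c \<noteq> 0"
  then obtain n where n0: "c = of_int n" by auto
  then have n: "c = of_int n" "n \<noteq> 0" using \<open>c \<noteq> 0\<close> by auto
  then obtain k m where "n = 2 ^ k * (1 + 2 * m)" using two_split by blast
  then have "c = 2 ^ k * (1 + 2 * of_int m)" using n by simp
  then show "\<exists>k a h. a \<in> range of_int \<and> a \<noteq> 0 \<and> inverse a \<in> range of_int \<and> h \<in> range of_int \<and>
      c = 2 ^ k * (a + 2 * h)"
    by (intro exI[of _ k] exI[of _ 1] exI[of _ "of_int m"]) (auto intro: range_eqI[of _ _ 1])
next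
  fix w :: 'a assume "w \<noteq> 0"
  show "\<exists>p. cin (range of_int) p \<and> p \<noteq> 0 \<and> poly p w = 0" using alg cin_def by blast
qed



definition transc :: "'a::field set \<Rightarrow> 'a \<Rightarrow> bool" where
  "transc S t \<longleftrightarrow> (\<forall>p. cin S p \<and> poly p t = 0 \<longrightarrow> p = 0)"

lemma chain_cin:
  assumes C: "C \<noteq> {}" "\<And>S. S \<in> C \<Longrightarrow> subring S" "\<forall>x\<in>C. \<forall>y\<in>C. x \<subseteq> y \<or> y \<subseteq> x"
    and p: "cin (\<Union>C) p"
  shows "\<exists>S\<in>C. cin S p"
proof -
  have pc: "coeff p i \<in> \<Union>C" for i using p by (simp add: cin_def)
  have "\<exists>S\<in>C. \<forall>i\<le>n. coeff p i \<in> S" for n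
  proof (induct n)
    case 0
    obtain S where "S \<in> C" "coeff p 0 \<in> S" using pc[of 0] by (rule UnionE)
    then show ?case by blast
  next
    case (Suc n)
    then obtain S where S: "S \<in> C" "\<forall>i\<le>n. coeff p i \<in> S" by (rule bexE)
    obtain S' where S': "S' \<in> C" "coeff p (Suc n) \<in> S'" using pc[of "Suc n"] by (rule UnionE)
    show ?case
    proof (cases "S \<subseteq> S'")
      case True
      have "\<forall>i\<le>Suc n. coeff p i \<in> S'"
      proof (intro allI impI)
        fix i assume i: "i \<le> Suc n"
        show "coeff p i \<in> S'"
        proof (cases "i = Suc n")
          case True then show ?thesis using S'(2) by simp
        next
          case False then have "i \<le> n" using i by simp
          then have "coeff p i \<in> S" using S(2) by simp
          then show ?thesis using True by (rule subsetD[rotated])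
        qed
      qed
      then show ?thesis using S'(1) by (rule bexI)
    next
      case False
      then have SS: "S' \<subseteq> S" using C(3) S(1) S'(1) by blast
      have "\<forall>i\<le>Suc n. coeff p i \<in> S"
      proof (intro allI impI)
        fix i assume i: "i \<le> Suc n"
        show "coeff p i \<in> S"
        proof (cases "i = Suc n")
          case True then show ?thesis using S'(2) SS by auto
        next
          case False then have "i \<le> n" using i by simp
          then show ?thesis using S(2) by simp
        qed
      qed
      then show ?thesis using S(1) by (rule bexI)
    qed
  qed
  then obtain S where S: "S \<in> C" "\<forall>i\<le>degree p. coeff p i \<in> S" by (rule bexE)
  have "cin S p" unfolding cin_def
  proof
    fix i show "coeff p i \<in> S"
    proof (cases "i \<le> degree p")
      case True then show ?thesis using S(2) by simp
    next
      case False
      then have "coeff p i = 0" by (simp add: coeff_eq_0)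
      then show ?thesis using sr_zero[OF C(2)[OF S(1)]] by simp
    qed
  qed
  then show ?thesis using S(1) by (rule bexI)
qed

lemma transc_inv:
  fixes t :: "'a::field"
  assumes L: "subring L" "transc L t" and a: "a \<in> L" "a \<noteq> 0"
  shows "transc (adj L (inverse a)) t"
  unfolding transc_def
proof (intro allI impI)
  fix p assume "cin (adj L (inverse a)) p \<and> poly p t = 0"
  then have p: "cin (adj L (inverse a)) p" "poly p t = 0" by auto
  have "\<forall>i. \<exists>q. cin L q \<and> poly q (inverse a) = coeff p i"
  proof
    fix i
    have "coeff p i \<in> adj L (inverse a)" using p(1) by (simp add: cin_def)
    then show "\<exists>q. cin L q \<and> poly q (inverse a) = coeff p i" unfolding adj_def by auto
  qed
  then obtain q where q: "\<And>i. cin L (q i)" "\<And>i. poly (q i) (inverse a) = coeff p i" by metis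
  define D where "D = (\<Sum>i\<le>degree p. degree (q i))"
  have dq: "degree (q i) \<le> D" if "i \<le> degree p" for i
    unfolding D_def using that by (intro member_le_sum) auto
  have "cin L (smult (a ^ D) p)" unfolding cin_def
  proof
    fix i
    show "coeff (smult (a ^ D) p) i \<in> L"
    proof (cases "i \<le> degree p")
      case False
      then show ?thesis using coeff_eq_0[of p i] sr_zero[OF L(1)] by simp
    next
      case True
      have "a ^ D = a ^ (D - degree (q i)) * a ^ degree (q i)"
        using dq[OF True] by (simp add: power_add[symmetric])
      then have "coeff (smult (a ^ D) p) i = a ^ (D - degree (q i)) * poly (reflect_poly (q i)) a"
        using poly_reflect_poly_nz[OF a(2), of "q i"] q(2)[of i] by simp
      moreover have "poly (reflect_poly (q i)) a \<in> L"
        by (rule poly_in[OF L(1) cin_reflect[OF L(1) q(1)] a(1)])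
      ultimately show ?thesis using sr_mult[OF L(1)] sr_power[OF L(1) a(1)] by simp
    qed
  qed
  moreover have "poly (smult (a ^ D) p) t = 0" using p(2) by simp
  ultimately have "smult (a ^ D) p = 0" using L(2) transc_def by blast
  then show "p = 0" using a(2) by simp
qed

lemma swap:
  fixes t w :: "'a::field"
  assumes L: "subring L" "transc L t" and w: "transc (adj L t) w"
  shows "transc (adj L w) t"
  unfolding transc_def
proof (intro allI impI)
  fix p assume "cin (adj L w) p \<and> poly p t = 0"
  then have p: "cin (adj L w) p" "poly p t = 0" by auto
  define n where "n = degree p"
  have "\<forall>i. \<exists>q. cin L q \<and> poly q w = coeff p i"
  proof
    fix i
    have "coeff p i \<in> adj L w" using p(1) by (simp add: cin_def)
    then show "\<exists>q. cin L q \<and> poly q w = coeff p i" unfolding adj_def by auto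
  qed
  then obtain q where q: "\<And>i. cin L (q i)" "\<And>i. poly (q i) w = coeff p i" by metis
  define D where "D = (\<Sum>i\<le>n. degree (q i))"
  have dq: "degree (q i) \<le> D" if "i \<le> n" for i
    unfolding D_def using that by (intro member_le_sum) auto
  define R where "R j = (\<Sum>i\<le>n. monom (coeff (q i) j) i)" for j
  have cR: "cin L (R j)" for j
    unfolding R_def using q(1) L(1) by (intro cin_sum cin_monom) (auto simp: cin_def)
  have coR: "coeff (R j) i = coeff (q i) j" if "i \<le> n" for i j
    unfolding R_def using coeff_sum_monom[OF that] .
  have pR: "poly (R j) t = (\<Sum>i\<le>n. coeff (q i) j * t ^ i)" for j
    unfolding R_def poly_sum by (simp add: poly_monom)
  define P where "P = (\<Sum>j\<le>D. monom (poly (R j) t) j)"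
  have cP: "cin (adj L t) P"
    unfolding P_def using adj_subring[OF L(1)] cR
    by (intro cin_sum cin_monom) (auto simp: adj_def)
  have "poly P w = (\<Sum>j\<le>D. poly (R j) t * w ^ j)"
    unfolding P_def poly_sum by (simp add: poly_monom)
  also have "\<dots> = (\<Sum>j\<le>D. \<Sum>i\<le>n. coeff (q i) j * w ^ j * t ^ i)"
    unfolding pR sum_distrib_right by (simp add: mult_ac)
  also have "\<dots> = (\<Sum>i\<le>n. \<Sum>j\<le>D. coeff (q i) j * w ^ j * t ^ i)"
    by (rule sum.swap)
  also have "\<dots> = (\<Sum>i\<le>n. coeff p i * t ^ i)"
  proof (rule sum.cong[OF refl])
    fix i assume "i \<in> {..n}"
    then have "poly (q i) w = (\<Sum>j\<le>D. coeff (q i) j * w ^ j)" using dq poly_le by auto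
    then show "(\<Sum>j\<le>D. coeff (q i) j * w ^ j * t ^ i) = coeff p i * t ^ i"
      using q(2)[of i] by (simp add: sum_distrib_right)
  qed
  also have "\<dots> = poly p t" using poly_le[of p n t] n_def by simp
  finally have "poly P w = 0" using p(2) by simp
  then have P0: "P = 0" using w cP transc_def by blast
  have "R j = 0" if "j \<le> D" for j
  proof -
    have "coeff P j = poly (R j) t" unfolding P_def using coeff_sum_monom[OF that] .
    then have "poly (R j) t = 0" using P0 by simp
    then show ?thesis using L(2) cR transc_def by blast
  qed
  then have "q i = 0" if "i \<le> n" for i
  proof -
    have "coeff (q i) j = 0" for j
    proof (cases "j \<le> D")
      case True
      then show ?thesis using coR[OF that, of j] \<open>\<And>j. j \<le> D \<Longrightarrow> R j = 0\<close> by simp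
    next
      case False
      then show ?thesis using dq[OF that] by (intro coeff_eq_0) linarith
    qed
    then show ?thesis by (intro poly_eqI) simp
  qed
  then have "coeff p i = 0" for i
    using q(2)[of i] coeff_eq_0[of p i] n_def by (cases "i \<le> n") auto
  then show "p = 0" by (intro poly_eqI) simp
qed

lemma factor:
  fixes f :: "'a::field poly"
  shows "f \<noteq> 0 \<Longrightarrow> cin S f \<Longrightarrow> \<exists>k f1. cin S f1 \<and> coeff f1 0 \<noteq> 0 \<and> (\<forall>x. poly f x = x ^ k * poly f1 x)"
proof (induct f rule: pCons_induct)
  case 0 then show ?case by simp
next
  case (pCons a p)
  show ?case
  proof (cases "a = 0")
    case False
    then show ?thesis using pCons.prems by (intro exI[of _ 0] exI[of _ "pCons a p"]) auto
  next
    case True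
    then have "p \<noteq> 0" using pCons by auto
    moreover have "cin S p" using pCons.prems cin_pCons by blast
    ultimately obtain k f1 where "cin S f1" "coeff f1 0 \<noteq> 0" "\<forall>x. poly p x = x ^ k * poly f1 x"
      using pCons.hyps by blast
    then show ?thesis using True by (intro exI[of _ "Suc k"] exI[of _ f1]) auto
  qed
qed

lemma caseA:
  fixes t :: "'a::field"
  assumes tr: "transc (range of_int) t"
  shows "\<exists>R::'a set. maximal_subring R \<and> integrally_closed_in_univ R \<and> conch_subring R"
proof -
  let ?F = "{L. subring L \<and> transc L t}"
  have "\<exists>M\<in>?F. \<forall>X\<in>?F. M \<subseteq> X \<longrightarrow> X = M"
  proof (rule zorn_sub)
    have "range of_int \<in> ?F" using tr range_of_int_subring by simp
    then show "?F \<noteq> {}" by blast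
  next
    fix C assume C: "C \<noteq> {}" "C \<subseteq> ?F" "\<forall>x\<in>C. \<forall>y\<in>C. x \<subseteq> y \<or> y \<subseteq> x"
    have "subring (\<Union>C)"
    proof (rule chain_subring[OF C(1) _ C(3)])
      fix S assume "S \<in> C" then show "subring S" using C(2) by blast
    qed
    moreover have "transc (\<Union>C) t" unfolding transc_def
    proof (intro allI impI)
      fix p assume "cin (\<Union>C) p \<and> poly p t = 0"
      then obtain S where "S \<in> C" "cin S p" "poly p t = 0" using chain_cin[of C p] C by blast
      then show "p = 0" using C(2) transc_def by blast
    qed
    ultimately show "\<Union>C \<in> ?F" by simp
  qed
  then obtain L where L1: "L \<in> ?F" and L2: "\<forall>X\<in>?F. L \<subseteq> X \<longrightarrow> X = L" ..
  have Lf: "subring L" "transc L t" using L1 by simp_all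
  have Lmax: "X = L" if "subring X" "transc X t" "L \<subseteq> X" for X
  proof -
    have "X \<in> ?F" using that by simp
    then show ?thesis using L2 that(3) by (metis (no_types, lifting))
  qed
  have t0: "t \<noteq> 0"
  proof
    assume "t = 0"
    then have "poly [:0, 1:] t = 0" by simp
    moreover have "cin L [:0, 1:]" using Lf(1) by (simp add: cin_pCons sr_zero sr_one cin_zero)
    ultimately show False using Lf(2) transc_def by fastforce
  qed
  have inv: "inverse a \<in> L" if "a \<in> L" "a \<noteq> 0" for a
  proof -
    have "adj L (inverse a) = L"
      using Lmax[OF adj_subring[OF Lf(1)] transc_inv[OF Lf that] adj_sub[OF Lf(1)]] .
    then show ?thesis using adj_y[OF Lf(1)] by blast
  qed
  let ?B = "adj L t"
  have LB: "L \<subseteq> ?B" by (rule adj_sub[OF Lf(1)])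
  show ?thesis
  proof (rule from_base[of ?B t])
    show sB: "subring ?B" by (rule adj_subring[OF Lf(1)])
    show "t \<in> ?B" by (rule adj_y[OF Lf(1)])
    show "inverse t \<notin> ?B"
    proof
      assume "inverse t \<in> ?B"
      then obtain f where f: "cin L f" "poly f t = inverse t" unfolding adj_def by auto
      have "cin L (pCons (-1) f)" using f(1) Lf(1) by (simp add: cin_pCons sr_neg sr_one)
      moreover have "poly (pCons (-1) f) t = 0" using f(2) t0 by simp
      ultimately have "pCons (-1) f = 0" using Lf(2) transc_def by blast
      then show False by simp
    qed
  next
    fix c assume c: "c \<in> ?B" "c \<noteq> 0"
    then obtain f where f: "cin L f" "c = poly f t" unfolding adj_def by auto
    then have "f \<noteq> 0" using c(2) by auto
    then obtain k f1 where f1: "cin L f1" "coeff f1 0 \<noteq> 0" "\<forall>x. poly f x = x ^ k * poly f1 x"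
      using factor f(1) by blast
    obtain a h where ah: "f1 = pCons a h" by (metis pCons_cases)
    have aL: "a \<in> L" and hL: "cin L h" using f1(1) ah cin_pCons by auto
    have a0: "a \<noteq> 0" using f1(2) ah by simp
    have "c = t ^ k * (a + t * poly h t)" using f(2) f1(3) ah by simp
    moreover have "poly h t \<in> ?B" using hL unfolding adj_def by auto
    ultimately show "\<exists>k a h. a \<in> ?B \<and> a \<noteq> 0 \<and> inverse a \<in> ?B \<and> h \<in> ?B \<and> c = t ^ k * (a + t * h)"
      using aL a0 inv[OF aL a0] LB by blast
  next
    fix w :: 'a assume w0: "w \<noteq> 0"
    show "\<exists>p. cin ?B p \<and> p \<noteq> 0 \<and> poly p w = 0"
    proof (rule ccontr)
      assume nt: "\<not> ?thesis"
      then have "transc ?B w" unfolding transc_def by blast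
      then have "transc (adj L w) t" by (rule swap[OF Lf])
      then have "adj L w = L" using Lmax[OF adj_subring[OF Lf(1)] _ adj_sub[OF Lf(1)]] by blast
      then have wL: "w \<in> L" using adj_y[OF Lf(1)] by blast
      have "cin ?B [:- w, 1:]"
        using wL LB adj_subring[OF Lf(1)] by (auto simp: cin_pCons sr_neg sr_one cin_zero)
      moreover have "poly [:- w, 1:] w = 0" by simp
      moreover have "[:- w, 1:] \<noteq> 0" by simp
      ultimately show False using nt by blast
    qed
  qed
qed


theorem corollary2p3:
  assumes "\<not> absolutely_algebraic TYPE('a::field)"
  shows "\<exists>R::'a set. maximal_subring R \<and> integrally_closed_in_univ R \<and> conch_subring R"
proof (cases "\<exists>x::'a. transc (range of_int) x")
  case True
  then obtain x :: 'a where "transc (range of_int) x" by blast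
  then show ?thesis by (rule caseA)
next
  case False
  then have alg: "\<forall>x::'a. \<exists>p. p \<noteq> 0 \<and> (\<forall>i. coeff p i \<in> range of_int) \<and> poly p x = 0"
    unfolding transc_def cin_def by blast
  then have "\<not> prime CHAR('a)" using assms unfolding absolutely_algebraic_def by blast
  then have "CHAR('a) = 0" using prime_CHAR_semidom by (metis gr0I)
  then show ?thesis using caseB alg by blast
qed

end
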